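(* Let $L=2\pi$ and let $A:D(A)\subset L^2(0,L)\to L^2(0,L)$ be defined by $A\varphi=-\varphi_x-\varphi_{xxx}$ with $D(A)=\{\varphi\in H^3(0,L):\varphi(0)=\varphi(L)=\varphi_x(L)=0\}$. Then $\sigma_p(A)\cap i\mathbb R=\{0\}$. Moreover, the kernel of $A$ is $\{a(1-\cos x): a\in\mathbb R\}$.
   Context: Point spectrum is taken for the complexification of $A$. *)

theory Defs
  imports "HOL-Analysis.Analysis"
begin

text \<open>Sobolev space H^3(0,L) in one dimension, described through the
(absolutely continuous) representative: f, f1 = f', f2 = f'' are given as
indefinite integrals of f1, f2, f3 respectively, and f3 = f''' (weak third
derivative) lies in L^2(0,L).\<close>

definition H3_rep :: "real \<Rightarrow> (real \<Rightarrow> 'a::{real_normed_field,banach,second_countable_topology})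
    \<Rightarrow> (real \<Rightarrow> 'a) \<Rightarrow> (real \<Rightarrow> 'a) \<Rightarrow> (real \<Rightarrow> 'a) \<Rightarrow> bool" where
  "H3_rep L f f1 f2 f3 \<longleftrightarrow>
     set_borel_measurable lborel {0..L} f3 \<and>
     set_integrable lborel {0..L} (\<lambda>t. (norm (f3 t))\<^sup>2) \<and>
     (\<forall>x\<in>{0..L}. f2 x = f2 0 + (LINT t:{0..x}|lborel. f3 t)) \<and>
     (\<forall>x\<in>{0..L}. f1 x = f1 0 + (LINT t:{0..x}|lborel. f2 t)) \<and>
     (\<forall>x\<in>{0..L}. f x = f 0 + (LINT t:{0..x}|lborel. f1 t))"

definition A_eig :: "real \<Rightarrow> 'a::{real_normed_field,banach,second_countable_topology}
    \<Rightarrow> (real \<Rightarrow> 'a) \<Rightarrow> bool" where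
  "A_eig L c f \<longleftrightarrow> (\<exists>f1 f2 f3. H3_rep L f f1 f2 f3 \<and> f 0 = 0 \<and> f L = 0 \<and> f1 L = 0 \<and>
      (AE x in lborel. x \<in> {0..L} \<longrightarrow> - f1 x - f3 x = c * f x))"

definition point_spectrum_A :: "real \<Rightarrow> complex set" where
  "point_spectrum_A L = {c. \<exists>f :: real \<Rightarrow> complex.
      \<not> (AE x in lborel. x \<in> {0..L} \<longrightarrow> f x = 0) \<and> A_eig L c f}"

end

theory Submission
  imports Defs "HOL-Computational_Algebra.Fundamental_Theorem_Algebra"
begin


lemma prim_cont:
  fixes g F :: "real \<Rightarrow> 'a::euclidean_space"
  assumes "continuous_on {0..L} g" "\<forall>x\<in>{0..L}. F x = F 0 + (LINT t:{0..x}|lborel. g t)"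
  shows "continuous_on {0..L} F \<and> (\<forall>x\<in>{0..L}. (F has_vector_derivative g x) (at x within {0..L}))"
proof -
  have eq: "\<forall>x\<in>{0..L}. F x = F 0 + integral {0..x} g"
  proof
    fix x assume x: "x \<in> {0..L}"
    have "continuous_on {0..x} g" using assms(1) by (rule continuous_on_subset) (use x in auto)
    then have "set_integrable lborel {0..x} g" by (rule borel_integrable_atLeastAtMost')
    then have "(LINT t:{0..x}|lborel. g t) = integral {0..x} g" by (rule set_borel_integral_eq_integral(2))
    moreover have "F x = F 0 + (LINT t:{0..x}|lborel. g t)" using assms(2) x by blast
    ultimately show "F x = F 0 + integral {0..x} g" by simp
  qed
  have d: "\<forall>x\<in>{0..L}. (F has_vector_derivative g x) (at x within {0..L})"
  proof
    fix x assume x: "x \<in> {0..L}"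
    have "((\<lambda>u. F 0 + integral {0..u} g) has_vector_derivative g x) (at x within {0..L})"
      using has_vector_derivative_add[OF has_vector_derivative_const[of "F 0"] integral_has_vector_derivative[OF assms(1) x]]
      by simp
    then show "(F has_vector_derivative g x) (at x within {0..L})"
      using has_vector_derivative_transform[OF x, of F "\<lambda>u. F 0 + integral {0..u} g"] eq by blast
  qed
  then have "continuous_on {0..L} F"
    unfolding continuous_on_eq_continuous_within using has_vector_derivative_continuous by blast
  with d show ?thesis by blast
qed

lemma prim_cont_L:
  fixes g F :: "real \<Rightarrow> 'a::euclidean_space"
  assumes "set_integrable lborel {0..L} g" "\<forall>x\<in>{0..L}. F x = F 0 + (LINT t:{0..x}|lborel. g t)"
  shows "continuous_on {0..L} F"
proof -
  have eq: "\<forall>x\<in>{0..L}. F x = F 0 + integral {0..x} g"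
  proof
    fix x assume x: "x \<in> {0..L}"
    have "set_integrable lborel {0..x} g" by (rule set_integrable_subset[OF assms(1)]) (use x in auto)
    then have "(LINT t:{0..x}|lborel. g t) = integral {0..x} g" by (rule set_borel_integral_eq_integral(2))
    moreover have "F x = F 0 + (LINT t:{0..x}|lborel. g t)" using assms(2) x by blast
    ultimately show "F x = F 0 + integral {0..x} g" by simp
  qed
  have "continuous_on {0..L} (\<lambda>x. F 0 + integral {0..x} g)"
    using indefinite_integral_continuous_1[OF set_borel_integral_eq_integral(1)[OF assms(1)]]
    by (intro continuous_intros)
  moreover have "continuous_on {0..L} F = continuous_on {0..L} (\<lambda>x. F 0 + integral {0..x} g)"
    by (rule continuous_on_cong) (use eq in blast)+
  ultimately show ?thesis by simp
qed

lemma L2_L1: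
  fixes f3 :: "real \<Rightarrow> 'a::{banach,second_countable_topology}"
  assumes "set_borel_measurable lborel {0..L} f3"
     "set_integrable lborel {0..L} (\<lambda>t. (norm (f3 t))\<^sup>2)"
  shows "set_integrable lborel {0..L} f3"
proof -
  have i1: "integrable lborel (\<lambda>x. indicator {0..L} x *\<^sub>R (norm (f3 x))\<^sup>2)"
    using assms(2) unfolding set_integrable_def .
  have fin: "emeasure lborel {0..L} < \<infinity>" by (simp add: emeasure_lborel_Icc_eq)
  have i2: "integrable lborel (\<lambda>x. indicator {0..L} x *\<^sub>R (1::real))"
    by (rule integrableI_bounded_set_indicator[where B=1, OF _ _ fin]) auto
  have i12: "integrable lborel (\<lambda>x. indicator {0..L} x *\<^sub>R (norm (f3 x))\<^sup>2 + indicator {0..L} x *\<^sub>R (1::real))"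
    by (rule Bochner_Integration.integrable_add[OF i1 i2])
  have meas: "(\<lambda>x. indicator {0..L} x *\<^sub>R f3 x) \<in> borel_measurable lborel"
      using assms(1) unfolding set_borel_measurable_def .
  have ae: "AE x in lborel. norm (indicator {0..L} x *\<^sub>R f3 x) \<le> norm (indicator {0..L} x *\<^sub>R (norm (f3 x))\<^sup>2 + indicator {0..L} x *\<^sub>R (1::real))"
    proof (rule AE_I2)
      fix x
      have "0 \<le> (norm (f3 x) - 1)\<^sup>2" by (rule zero_le_power2)
      then have "2 * norm (f3 x) \<le> (norm (f3 x))\<^sup>2 + 1"
        unfolding power2_eq_square by (simp add: algebra_simps)
      then have le: "norm (f3 x) \<le> (norm (f3 x))\<^sup>2 + 1"
        using norm_ge_zero[of "f3 x"] by linarith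
      show "norm (indicator {0..L} x *\<^sub>R f3 x) \<le> norm (indicator {0..L} x *\<^sub>R (norm (f3 x))\<^sup>2 + indicator {0..L} x *\<^sub>R (1::real))"
      proof (cases "x \<in> {0..L}")
        case True
        have "norm (indicator {0..L} x *\<^sub>R (norm (f3 x))\<^sup>2 + indicator {0..L} x *\<^sub>R (1::real)) = (norm (f3 x))\<^sup>2 + 1"
          using True by simp
        then show ?thesis using True le by simp
      next
        case False then show ?thesis by simp
      qed
    qed
  show ?thesis unfolding set_integrable_def by (rule Bochner_Integration.integrable_bound[OF i12 meas ae])
qed

lemma reg:
  fixes f :: "real \<Rightarrow> 'a::{real_normed_field,euclidean_space}"
  assumes H: "H3_rep L f f1 f2 f3"
    and AE: "AE x in lborel. x \<in> {0..L} \<longrightarrow> - f1 x - f3 x = c * f x"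
  shows "\<forall>x\<in>{0..L}. (f has_vector_derivative f1 x) (at x within {0..L}) \<and>
     (f1 has_vector_derivative f2 x) (at x within {0..L}) \<and>
     (f2 has_vector_derivative (- f1 x - c * f x)) (at x within {0..L})"
proof -
  note H' = H[unfolded H3_rep_def]
  have i3: "set_integrable lborel {0..L} f3" using L2_L1 H' by blast
  have c2: "continuous_on {0..L} f2" using prim_cont_L[OF i3] H' by blast
  have c1: "continuous_on {0..L} f1 \<and> (\<forall>x\<in>{0..L}. (f1 has_vector_derivative f2 x) (at x within {0..L}))"
    using prim_cont[OF c2] H' by blast
  have c0: "continuous_on {0..L} f \<and> (\<forall>x\<in>{0..L}. (f has_vector_derivative f1 x) (at x within {0..L}))"
    using prim_cont[of L f1 f] c1 H' by blast
  define g where "g = (\<lambda>t. - f1 t - c * f t)"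
  have cg: "continuous_on {0..L} g" unfolding g_def using c0 c1 by (intro continuous_intros) auto
  have "\<forall>x\<in>{0..L}. f2 x = f2 0 + (LINT t:{0..x}|lborel. g t)"
  proof
    fix x assume x: "x \<in> {0..L}"
    have s3: "set_integrable lborel {0..x} f3" by (rule set_integrable_subset[OF i3]) (use x in auto)
    have "continuous_on {0..x} g" using cg by (rule continuous_on_subset) (use x in auto)
    then have sg: "set_integrable lborel {0..x} g" by (rule borel_integrable_atLeastAtMost')
    have "(LINT t:{0..x}|lborel. f3 t) = (LINT t:{0..x}|lborel. g t)"
      unfolding set_lebesgue_integral_def
    proof (rule integral_cong_AE)
      show "(\<lambda>t. indicator {0..x} t *\<^sub>R f3 t) \<in> borel_measurable lborel"
        using s3 unfolding set_integrable_def by (rule borel_measurable_integrable)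
      show "(\<lambda>t. indicator {0..x} t *\<^sub>R g t) \<in> borel_measurable lborel"
        using sg unfolding set_integrable_def by (rule borel_measurable_integrable)
      show "AE t in lborel. indicator {0..x} t *\<^sub>R f3 t = indicator {0..x} t *\<^sub>R g t"
        using AE
      proof eventually_elim
        case (elim t)
        show ?case
        proof (cases "t \<in> {0..x}")
          case True
          then have "t \<in> {0..L}" using x by auto
          with elim have e: "- f1 t - f3 t = c * f t" by blast
          have "f3 t = - f1 t - (- f1 t - f3 t)" by simp
          also have "\<dots> = g t" unfolding g_def e ..
          finally show ?thesis by simp
        next
          case False then show ?thesis by simp
        qed
      qed
    qed
    moreover have "f2 x = f2 0 + (LINT t:{0..x}|lborel. f3 t)" using H' x by blast
    ultimately show "f2 x = f2 0 + (LINT t:{0..x}|lborel. g t)" by simp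
  qed
  then have "\<forall>x\<in>{0..L}. (f2 has_vector_derivative g x) (at x within {0..L})"
    using prim_cont[OF cg] by blast
  then show ?thesis using c0 c1 unfolding g_def by blast
qed



lemma const_deriv:
  fixes F :: "real \<Rightarrow> 'b::real_normed_vector"
  assumes "\<forall>x\<in>{a..b}. (F has_vector_derivative 0) (at x within {a..b})" "x \<in> {a..b}" "y \<in> {a..b}"
  shows "F x = F y"
proof -
  have "\<exists>k. \<forall>x\<in>{a..b}. F x = k"
    by (rule has_derivative_zero_constant) (use assms(1) in \<open>auto simp: has_vector_derivative_def\<close>)
  then show ?thesis using assms(2,3) by auto
qed

lemma cubic_root: "\<exists>z::complex. z^3 + z = c"
proof -
  have "\<exists>z. poly [:-c, 1, 0, 1:] z = (0::complex)"
    by (rule fundamental_theorem_of_algebra_alt) (auto simp: pCons_eq_iff)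
  then obtain z where "poly [:-c, 1, 0, 1:] z = (0::complex)" by blast
  then have "z^3 + z = c" by (simp add: algebra_simps power3_eq_cube)
  then show ?thesis by blast
qed

lemma three_roots: "\<exists>s1 s2 s3::complex. s1^3 + s1 = c \<and> s2 + s3 = -s1 \<and> s2* s3 = s1^2+1"
proof -
  obtain s1 where s1: "s1^3 + s1 = c" using cubic_root by blast
  define r where "r = csqrt (-3* s1^2 - 4)"
  have r2: "r^2 = -3* s1^2 - 4" unfolding r_def by simp
  define s2 where "s2 = (-s1 + r)/2"
  define s3 where "s3 = (-s1 - r)/2"
  have "s2 + s3 = -s1" unfolding s2_def s3_def by (simp add: field_simps)
  moreover have "s2* s3 = s1^2+1" unfolding s2_def s3_def using r2
    by (simp add: field_simps power2_eq_square)
  ultimately show ?thesis using s1 by blast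
qed

lemma other_root: fixes s1 s2 s3 :: complex assumes "s2 + s3 = -s1" "s2* s3 = s1^2+1" shows "s2^3 + s2 = s1^3 + s1"
proof -
  have "s2^2 + s1* s2 + s1^2 + 1 = s2 * (s2 + s1 + s3)" using assms(2) by (simp add: algebra_simps power2_eq_square)
  also have "\<dots> = 0" using assms(1) by (simp add: algebra_simps)
  finally have z: "s2^2 + s1* s2 + s1^2 + 1 = 0" .
  have "s2^3 + s2 - (s1^3 + s1) = (s2 - s1) * (s2^2 + s1* s2 + s1^2 + 1)"
    by (simp add: algebra_simps power2_eq_square power3_eq_cube)
  then show ?thesis using z by simp
qed

lemma kl_eq: fixes s1 s2 s3 K M :: complex assumes "s2 + s3 = -s1" "s2 * s3 = s1^2+1" "s2 = s1 - \<i>*K" "s3 = s1 - \<i>*M"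
  shows "K^2 - K*M + M^2 = 3" "3 * s1 = \<i> * (K + M)"
proof -
  show t: "3 * s1 = \<i> * (K + M)" using assms(1,3,4) by (simp add: algebra_simps)
  have "(s1 - \<i>*K) * (s1 - \<i>*M) = s1^2 + 1" using assms(2,3,4) by simp
  then have p: "\<i>*(K+M)* s1 + K*M + 1 = 0" by (simp add: algebra_simps power2_eq_square)
  have "0 = 3 * (\<i>*(K+M)* s1 + K*M + 1)" using p by simp
  also have "\<dots> = \<i>*(K+M)*(3* s1) + 3*K*M + 3" by (simp add: algebra_simps)
  also have "\<dots> = \<i>*(K+M)*(\<i> * (K + M)) + 3*K*M + 3" using t by simp
  also have "\<dots> = 3 - (K^2 - K*M + M^2)" by (simp add: algebra_simps power2_eq_square)
  finally show "K^2 - K*M + M^2 = 3" by simp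
qed
lemma sq_bound: fixes m :: int assumes "m^2 \<le> n" "n < 16" shows "\<bar>m\<bar> \<le> 3"
proof (rule ccontr)
  assume "\<not> \<bar>m\<bar> \<le> 3"
  then have "4 \<le> \<bar>m\<bar>" by simp
  then have "4*4 \<le> \<bar>m\<bar> * \<bar>m\<bar>" by (intro mult_mono) auto
  moreover have "m^2 = \<bar>m\<bar> * \<bar>m\<bar>" by (simp add: power2_eq_square)
  ultimately show False using assms by linarith
qed
lemma int_case: fixes m d :: int assumes "m^2 + 3*d^2 = 12" shows "m * (9 - m^2) = 0"
proof -
  have "0 \<le> d^2" "0 \<le> m^2" by simp_all
  then have "m^2 \<le> 12" "d^2 \<le> 4" using assms by linarith+
  then have "\<bar>m\<bar> \<le> 3" "\<bar>d\<bar> \<le> 3" using sq_bound by fastforce+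
  then have "m \<in> {-3..3}" "d \<in> {-3..3}" by auto
  then have "m \<in> {-3,-2,-1,0,1,2,3}" "d \<in> {-3,-2,-1,0,1,2,3}" by auto
  then show ?thesis using assms by auto
qed

lemma diff_int:
  fixes s t :: complex
  assumes "exp ((2*pi) *\<^sub>R s) = exp ((2*pi) *\<^sub>R t)"
  shows "\<exists>n::int. s - t = \<i> * of_int n"
proof -
  have "exp ((2*pi) *\<^sub>R (s - t)) = exp ((2*pi) *\<^sub>R s) / exp ((2*pi) *\<^sub>R t)"
    by (simp add: scaleR_diff_right exp_diff)
  then have "exp ((2*pi) *\<^sub>R (s - t)) = 1" using assms by simp
  then obtain n::int where h: "Re ((2*pi) *\<^sub>R (s - t)) = 0" "Im ((2*pi) *\<^sub>R (s - t)) = of_int (2*n) * pi"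
    unfolding exp_eq_1 by blast
  have "Re (s - t) = 0" using h(1) by simp
  moreover have "pi * (2 * Im (s - t)) = pi * (2 * of_int n)" using h(2) by (simp add: algebra_simps)
  then have "Im (s - t) = of_int n" by simp
  ultimately have "s - t = \<i> * of_int n" by (simp add: complex_eq_iff)
  then show ?thesis by blast
qed

lemma caseB:
  fixes c s1 s2 s3 :: complex
  assumes r1: "s1^3 + s1 = c" and r2: "s2^3 + s2 = c" and r3: "s3^3 + s3 = c"
    and r23: "s2 + s3 = -s1" "s2 * s3 = s1^2+1"
    and ex: "\<And>s. s^3 + s = c \<Longrightarrow> exp ((2*pi) *\<^sub>R s) = w"
  shows "c = 0"
proof -
  obtain k where k: "s1 - s2 = \<i> * of_int k" using diff_int ex[OF r1] ex[OF r2] by metis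
  obtain l where l: "s1 - s3 = \<i> * of_int l" using diff_int ex[OF r1] ex[OF r3] by metis
  have "s2 = s1 - (s1 - s2)" by simp
  then have k': "s2 = s1 - \<i> * of_int k" using k by simp
  have "s3 = s1 - (s1 - s3)" by simp
  then have l': "s3 = s1 - \<i> * of_int l" using l by simp
  note E = kl_eq[OF r23 k' l']
  have "of_int ((k+l)^2 + 3*(k-l)^2) = (4::complex) * ((of_int k)^2 - of_int k * of_int l + (of_int l)^2)"
    by (simp add: algebra_simps power2_eq_square)
  then have "of_int ((k+l)^2 + 3*(k-l)^2) = (of_int 12 :: complex)"
    using E(1) by simp
  then have "(k+l)^2 + 3*(k-l)^2 = 12" by (simp only: of_int_eq_iff)
  then have m: "(k+l) * (9 - (k+l)^2) = 0" by (rule int_case)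
  have "27 * c = 27 * (s1^3 + s1)" using r1 by simp
  also have "\<dots> = 27 * s1^3 + 27 * s1" by (simp add: distrib_left)
  also have "\<dots> = (3* s1)^3 + 9 * (3* s1)" by (simp add: power3_eq_cube)
  also have "\<dots> = (\<i> * of_int (k+l))^3 + 9 * (\<i> * of_int (k+l))" using E(2) by simp
  also have "\<dots> = \<i> * of_int ((k+l) * (9 - (k+l)^2))"
    by (simp add: power3_eq_cube power2_eq_square algebra_simps)
  also have "\<dots> = 0" by (simp only: m of_int_0 mult_zero_right)
  finally show ?thesis by simp
qed
lemma core:
  fixes f f1 f2 :: "real \<Rightarrow> complex"
  assumes d: "\<forall>x\<in>{0..2*pi}. (f has_vector_derivative f1 x) (at x within {0..2*pi}) \<and>
     (f1 has_vector_derivative f2 x) (at x within {0..2*pi}) \<and>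
     (f2 has_vector_derivative (- f1 x - c * f x)) (at x within {0..2*pi})"
    and b0: "f 0 = 0" and bL: "f (2*pi) = 0" and b1: "f1 (2*pi) = 0" and rc: "Re c = 0"
    and nz: "\<exists>x\<in>{0..2*pi}. f x \<noteq> 0"
  shows "c = 0"
proof -
  define L where "L = 2*pi"
  define S where "S = {0..L}"
  have dS: "\<forall>x\<in>S. (f has_vector_derivative f1 x) (at x within S) \<and>
     (f1 has_vector_derivative f2 x) (at x within S) \<and>
     (f2 has_vector_derivative (- f1 x - c * f x)) (at x within S)" using d unfolding S_def L_def .
  have L0: "0 \<in> S" "L \<in> S" unfolding S_def L_def by auto
  have cc: "cnj c = - c" using rc by (simp add: complex_eq_iff)
  define W where "W = (\<lambda>x. f2 x * cnj (f x) + cnj (f2 x) * f x - f1 x * cnj (f1 x) + f x * cnj (f x))"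
  have "\<forall>x\<in>S. (W has_vector_derivative 0) (at x within S)"
  proof
    fix x assume x: "x \<in> S"
    have "(W has_vector_derivative
       (f2 x * cnj (f1 x) + (- f1 x - c * f x) * cnj (f x)
       + (cnj (f2 x) * f1 x + cnj (- f1 x - c * f x) * f x)
       - (f1 x * cnj (f2 x) + f2 x * cnj (f1 x))
       + (f x * cnj (f1 x) + f1 x * cnj (f x)))) (at x within S)"
      unfolding W_def using dS x
      by (intro has_vector_derivative_add has_vector_derivative_diff has_vector_derivative_mult
          has_vector_derivative_cnj) auto
    moreover have "(f2 x * cnj (f1 x) + (- f1 x - c * f x) * cnj (f x)
       + (cnj (f2 x) * f1 x + cnj (- f1 x - c * f x) * f x)
       - (f1 x * cnj (f2 x) + f2 x * cnj (f1 x))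
       + (f x * cnj (f1 x) + f1 x * cnj (f x))) = 0"
      using cc by (simp add: algebra_simps)
    ultimately show "(W has_vector_derivative 0) (at x within S)" by simp
  qed
  then have "W 0 = W L" using const_deriv L0 unfolding S_def by blast
  then have "f1 0 * cnj (f1 0) = 0" unfolding W_def using b0 bL b1 unfolding L_def by simp
  then have a0: "f1 0 = 0" by simp
  have Hc: "\<forall>x\<in>S. exp (x *\<^sub>R s) * (f2 x - s * f1 x + (1 + s^2) * f x) = f2 0"
    if s: "s^3 + s = c" for s
  proof -
    define H where "H = (\<lambda>x. exp (x *\<^sub>R s) * (f2 x - s * f1 x + (1 + s^2) * f x))"
    have "\<forall>x\<in>S. (H has_vector_derivative 0) (at x within S)"
    proof
      fix x assume x: "x \<in> S"
      have "(H has_vector_derivative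
          exp (x *\<^sub>R s) * ((- f1 x - c * f x) - s * f2 x + (1 + s^2) * f1 x)
          + exp (x *\<^sub>R s) * s * (f2 x - s * f1 x + (1 + s^2) * f x)) (at x within S)"
        unfolding H_def using dS x
        by (intro has_vector_derivative_add has_vector_derivative_diff has_vector_derivative_mult
          has_vector_derivative_mult_right exp_scaleR_has_vector_derivative_right) auto
      moreover have "exp (x *\<^sub>R s) * ((- f1 x - c * f x) - s * f2 x + (1 + s^2) * f1 x)
          + exp (x *\<^sub>R s) * s * (f2 x - s * f1 x + (1 + s^2) * f x) = 0"
        using s[symmetric] by (simp add: algebra_simps power2_eq_square power3_eq_cube)
      ultimately show "(H has_vector_derivative 0) (at x within S)" by simp
    qed
    then have "\<forall>x\<in>S. H x = H 0" using const_deriv L0(1) unfolding S_def by blast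
    moreover have "H 0 = f2 0" unfolding H_def using b0 a0 by simp
    ultimately show ?thesis unfolding H_def by simp
  qed
  obtain s1 s2 s3 where r1: "s1^3 + s1 = c" and r23: "s2 + s3 = -s1" "s2* s3 = s1^2+1"
    using three_roots by blast
  have r2: "s2^3 + s2 = c" using other_root[OF r23] r1 by simp
  have r3: "s3^3 + s3 = c" using other_root[of s3 s2 s1] r23 r1 by (simp add: ac_simps)
  show "c = 0"
  proof (cases "f2 L = 0")
    case True
    have Z: "\<forall>x\<in>S. f2 x - s * f1 x + (1 + s^2) * f x = 0" if "s^3 + s = c" for s
    proof
      fix x assume x: "x \<in> S"
      have "exp (x *\<^sub>R s) * (f2 x - s * f1 x + (1 + s^2) * f x) = f2 0" using Hc[OF that] x by blast
      moreover have "f2 0 = 0"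
      proof -
        have "exp (L *\<^sub>R s) * (f2 L - s * f1 L + (1 + s^2) * f L) = f2 0" using Hc[OF that] L0(2) by blast
        then show "f2 0 = 0" using True bL b1 unfolding L_def by simp
      qed
      ultimately show "f2 x - s * f1 x + (1 + s^2) * f x = 0" by simp
    qed
    obtain u v where uv: "u \<noteq> v" "u^3 + u = c" "v^3 + v = c"
    proof (cases "s1 = s2")
      case True
      have "s1 \<noteq> s3"
      proof
        assume "s1 = s3"
        then have "s1 = 0" using True r23(1) by simp
        then show False using r23 True \<open>s1 = s3\<close> by simp
      qed
      then show ?thesis using that r1 r3 by blast
    next
      case False then show ?thesis using that r1 r2 by blast
    qed
    have e: "\<forall>x\<in>S. f1 x = (u + v) * f x"
    proof
      fix x assume x: "x \<in> S"
      have "(f2 x - u * f1 x + (1 + u^2) * f x) - (f2 x - v * f1 x + (1 + v^2) * f x) = 0"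
        using Z[OF uv(2)] Z[OF uv(3)] x by simp
      then have "(v - u) * (f1 x - (u + v) * f x) = 0" by (simp add: algebra_simps power2_eq_square)
      then show "f1 x = (u + v) * f x" using uv(1) by simp
    qed
    define K where "K = (\<lambda>x. exp (x *\<^sub>R (-(u+v))) * f x)"
    have "\<forall>x\<in>S. (K has_vector_derivative 0) (at x within S)"
    proof
      fix x assume x: "x \<in> S"
      have "(K has_vector_derivative exp (x *\<^sub>R (-(u+v))) * f1 x + exp (x *\<^sub>R (-(u+v))) * (-(u+v)) * f x) (at x within S)"
        unfolding K_def using dS x
        by (intro has_vector_derivative_mult exp_scaleR_has_vector_derivative_right) auto
      then show "(K has_vector_derivative 0) (at x within S)" using e x by (simp add: algebra_simps)
    qed
    then have "\<forall>x\<in>S. K x = K 0" using const_deriv L0(1) unfolding S_def by blast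
    then have "\<forall>x\<in>S. f x = 0" unfolding K_def using b0 by simp
    then show ?thesis using nz unfolding S_def L_def by blast
  next
    case False
    have ex: "exp ((2*pi) *\<^sub>R s) = f2 0 / f2 L" if "s^3 + s = c" for s
    proof -
      have "exp (L *\<^sub>R s) * (f2 L - s * f1 L + (1 + s^2) * f L) = f2 0" using Hc[OF that] L0(2) by blast
      then have "exp (L *\<^sub>R s) * f2 L = f2 0" using bL b1 unfolding L_def by simp
      then show ?thesis using False unfolding L_def by (simp add: field_simps)
    qed
    show ?thesis by (rule caseB[OF r1 r2 r3 r23 ex])
  qed
qed



lemma ftc_lint:
  fixes G g :: "real \<Rightarrow> 'a::euclidean_space"
  assumes "continuous_on {0..x} g" "\<And>t. t \<in> {0..x} \<Longrightarrow> (G has_vector_derivative g t) (at t within {0..x})" "0 \<le> x"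
  shows "(LINT t:{0..x}|lborel. g t) = G x - G 0"
proof -
  have "(LINT t:{0..x}|lborel. g t) = integral {0..x} g"
    by (rule set_borel_integral_eq_integral(2)[OF borel_integrable_atLeastAtMost'[OF assms(1)]])
  also have "\<dots> = G x - G 0"
    by (rule integral_unique[OF fundamental_theorem_of_calculus[OF assms(3) assms(2)]])
  finally show ?thesis .
qed

lemma dsin: "((\<lambda>x. a * sin x) has_real_derivative a * cos x) (at x within S)"
  by (rule has_field_derivative_at_within, rule DERIV_cmult, rule DERIV_sin)
lemma dcos: "((\<lambda>x. a * cos x) has_real_derivative - a * sin x) (at x within S)"
  using has_field_derivative_at_within[OF DERIV_cmult[OF DERIV_cos[of x], of a]] by simp
lemma d1cos: "((\<lambda>x. a * (1 - cos x)) has_real_derivative a * sin x) (at x within S)"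
proof -
  have "((\<lambda>x. a - a * cos x) has_real_derivative 0 - - a * sin x) (at x within S)"
    by (rule DERIV_diff[OF DERIV_const dcos])
  then show ?thesis by (simp add: right_diff_distrib)
qed

lemma A_eig_cos:
  fixes f :: "real \<Rightarrow> 'a::{real_normed_field,euclidean_space}"
  assumes fe: "\<forall>x\<in>{0..2*pi}. f x = of_real (a * (1 - cos x))"
  shows "A_eig (2*pi) 0 f"
proof -
  define F1 where "F1 = (\<lambda>x. of_real (a * sin x) :: 'a)"
  define F2 where "F2 = (\<lambda>x. of_real (a * cos x) :: 'a)"
  define F3 where "F3 = (\<lambda>x. of_real (- a * sin x) :: 'a)"
  define F0 where "F0 = (\<lambda>x. of_real (a * (1 - cos x)) :: 'a)"
  have d0: "(F0 has_vector_derivative F1 x) (at x within S)" for x S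
    unfolding F0_def F1_def by (rule has_vector_derivative_of_real[OF d1cos])
  have d1: "(F1 has_vector_derivative F2 x) (at x within S)" for x S
    unfolding F2_def F1_def by (rule has_vector_derivative_of_real[OF dsin])
  have d2: "(F2 has_vector_derivative F3 x) (at x within S)" for x S
    unfolding F2_def F3_def by (rule has_vector_derivative_of_real[OF dcos])
  have c1: "continuous_on S F1" for S unfolding F1_def by (intro continuous_intros)
  have c2: "continuous_on S F2" for S unfolding F2_def by (intro continuous_intros)
  have c3: "continuous_on S F3" for S unfolding F3_def by (intro continuous_intros)
  have H: "H3_rep (2*pi) f F1 F2 F3"
    unfolding H3_rep_def
  proof (intro conjI ballI)
    show "set_borel_measurable lborel {0..2 * pi} F3"
      unfolding set_borel_measurable_def F3_def by measurable
    show "set_integrable lborel {0..2 * pi} (\<lambda>t. (norm (F3 t))\<^sup>2)"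
      by (rule borel_integrable_atLeastAtMost') (use c3 in \<open>intro continuous_intros\<close>)
    fix x assume x: "x \<in> {0..2*pi}"
    then have x0: "0 \<le> x" by simp
    show "F2 x = F2 0 + (LINT t:{0..x}|lborel. F3 t)"
      using ftc_lint[OF c3 d2 x0] by simp
    show "F1 x = F1 0 + (LINT t:{0..x}|lborel. F2 t)"
      using ftc_lint[OF c2 d1 x0] by simp
    have "f x = F0 x" "f 0 = F0 0" using fe x unfolding F0_def by auto
    then show "f x = f 0 + (LINT t:{0..x}|lborel. F1 t)"
      using ftc_lint[OF c1 d0 x0] by simp
  qed
  have b: "f 0 = 0" "f (2*pi) = 0" "F1 (2*pi) = 0" using fe unfolding F1_def by auto
  have "AE x in lborel. x \<in> {0..2*pi} \<longrightarrow> - F1 x - F3 x = 0 * f x"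
    by (rule AE_I2) (simp add: F1_def F3_def)
  then show ?thesis unfolding A_eig_def using H b by blast
qed

lemma not_AE_cos: "\<not> (AE x in lborel. x \<in> {0..2*pi} \<longrightarrow> (complex_of_real (1 * (1 - cos x))) = 0)"
proof
  assume "AE x in lborel. x \<in> {0..2*pi} \<longrightarrow> (complex_of_real (1 * (1 - cos x))) = 0"
  then obtain N where N: "{x \<in> space lborel. \<not> (x \<in> {0..2*pi} \<longrightarrow> (complex_of_real (1 * (1 - cos x))) = 0)} \<subseteq> N"
    "emeasure lborel N = 0" "N \<in> sets lborel" by (rule AE_E)
  have "{1..2} \<subseteq> N"
  proof
    fix x :: real assume x: "x \<in> {1..2}"
    have p: "3 < pi" by (rule pi_gt3)
    then have "cos x < cos 0" using x by (subst cos_mono_less_eq) auto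
    then have "1 - cos x \<noteq> 0" by simp
    then show "x \<in> N" using N(1) x p by auto
  qed
  then have "emeasure lborel {1..2::real} \<le> emeasure lborel N" by (rule emeasure_mono[OF _ N(3)])
  then show False using N(2) by simp
qed

lemma kernel_real:
  fixes f f1 f2 :: "real \<Rightarrow> real"
  assumes d: "\<forall>x\<in>{0..2*pi}. (f has_vector_derivative f1 x) (at x within {0..2*pi}) \<and>
     (f1 has_vector_derivative f2 x) (at x within {0..2*pi}) \<and>
     (f2 has_vector_derivative (- f1 x - 0 * f x)) (at x within {0..2*pi})"
    and b0: "f 0 = 0" and bL: "f (2*pi) = 0" and b1: "f1 (2*pi) = 0"
  shows "\<forall>x\<in>{0..2*pi}. f x = f2 0 * (1 - cos x)"
proof -
  define S where "S = {0..2*pi}"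
  have dS: "\<forall>x\<in>S. (f has_vector_derivative f1 x) (at x within S) \<and>
     (f1 has_vector_derivative f2 x) (at x within S) \<and>
     (f2 has_vector_derivative (- f1 x - 0 * f x)) (at x within S)" using d unfolding S_def .
  have L0: "0 \<in> S" "2*pi \<in> S" unfolding S_def by auto
  define W where "W = (\<lambda>x. f2 x * f x + f2 x * f x - f1 x * f1 x + f x * f x)"
  have "\<forall>x\<in>S. (W has_vector_derivative 0) (at x within S)"
  proof
    fix x assume x: "x \<in> S"
    have "(W has_vector_derivative
       (f2 x * f1 x + (- f1 x - 0 * f x) * f x) + (f2 x * f1 x + (- f1 x - 0 * f x) * f x)
       - (f1 x * f2 x + f2 x * f1 x) + (f x * f1 x + f1 x * f x)) (at x within S)"
      unfolding W_def using dS x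
      by (intro has_vector_derivative_add has_vector_derivative_diff has_vector_derivative_mult) auto
    moreover have "(f2 x * f1 x + (- f1 x - 0 * f x) * f x) + (f2 x * f1 x + (- f1 x - 0 * f x) * f x)
       - (f1 x * f2 x + f2 x * f1 x) + (f x * f1 x + f1 x * f x) = 0"
      by (simp add: algebra_simps)
    ultimately show "(W has_vector_derivative 0) (at x within S)" by simp
  qed
  then have "W 0 = W (2*pi)" using const_deriv L0 unfolding S_def by blast
  then have "f1 0 * f1 0 = 0" unfolding W_def using b0 bL b1 by simp
  then have a0: "f1 0 = 0" by simp
  define al where "al = f2 0"
  define H where "H = (\<lambda>x. f2 x + f x)"
  have "\<forall>x\<in>S. (H has_vector_derivative 0) (at x within S)"
  proof
    fix x assume x: "x \<in> S"
    have "(H has_vector_derivative (- f1 x - 0 * f x) + f1 x) (at x within S)"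
      unfolding H_def using dS x by (intro has_vector_derivative_add) auto
    then show "(H has_vector_derivative 0) (at x within S)" by simp
  qed
  then have He: "\<forall>x\<in>S. f2 x + f x = al" using const_deriv[of 0 "2*pi" H _ 0] L0 b0
    unfolding S_def H_def al_def by auto
  define p where "p = (\<lambda>x. f1 x - al * sin x)"
  define q where "q = (\<lambda>x. f x - al * (1 - cos x))"
  have dp: "(p has_vector_derivative f2 x - al * cos x) (at x within S)" if "x \<in> S" for x
    unfolding p_def using dS that dsin[of al x S]
    by (intro has_vector_derivative_diff) (auto simp: has_real_derivative_iff_has_vector_derivative)
  have dq: "(q has_vector_derivative f1 x - al * sin x) (at x within S)" if "x \<in> S" for x
    unfolding q_def using dS that d1cos[of al x S]
    by (intro has_vector_derivative_diff) (auto simp: has_real_derivative_iff_has_vector_derivative)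
  define V where "V = (\<lambda>x. p x * p x + q x * q x)"
  have "\<forall>x\<in>S. (V has_vector_derivative 0) (at x within S)"
  proof
    fix x assume x: "x \<in> S"
    have "(V has_vector_derivative
       (p x * (f2 x - al * cos x) + (f2 x - al * cos x) * p x) + (q x * (f1 x - al * sin x) + (f1 x - al * sin x) * q x)) (at x within S)"
      unfolding V_def using dp[OF x] dq[OF x]
      by (intro has_vector_derivative_add has_vector_derivative_mult) auto
    moreover have f2e: "f2 x = al - f x" using He x by (simp add: algebra_simps)
    have "(p x * (f2 x - al * cos x) + (f2 x - al * cos x) * p x) + (q x * (f1 x - al * sin x) + (f1 x - al * sin x) * q x) = 0"
      unfolding p_def q_def f2e by (simp add: algebra_simps)
    ultimately show "(V has_vector_derivative 0) (at x within S)" by simp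
  qed
  then have "\<forall>x\<in>S. V x = V 0" using const_deriv L0(1) unfolding S_def by blast
  moreover have "V 0 = 0" unfolding V_def p_def q_def using a0 b0 by simp
  ultimately have "\<forall>x\<in>S. q x * q x = 0" unfolding V_def
    by (smt (verit) zero_le_square)
  then show ?thesis unfolding q_def S_def al_def by simp
qed

theorem lemma2p6:
  shows "point_spectrum_A (2 * pi) \<inter> {c. Re c = 0} = {0} \<and>
         (\<forall>f :: real \<Rightarrow> real. A_eig (2 * pi) 0 f \<longleftrightarrow>
           (\<exists>a::real. \<forall>x\<in>{0..2 * pi}. f x = a * (1 - cos x)))"
proof (intro conjI allI iffI)
  show "point_spectrum_A (2 * pi) \<inter> {c. Re c = 0} = {0}"
  proof
    show "point_spectrum_A (2 * pi) \<inter> {c. Re c = 0} \<subseteq> {0}"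
    proof
      fix c assume c: "c \<in> point_spectrum_A (2 * pi) \<inter> {c. Re c = 0}"
      then obtain f :: "real \<Rightarrow> complex" where nAE: "\<not> (AE x in lborel. x \<in> {0..2*pi} \<longrightarrow> f x = 0)"
        and E: "A_eig (2*pi) c f" unfolding point_spectrum_A_def by blast
      from E obtain f1 f2 f3 where H: "H3_rep (2*pi) f f1 f2 f3" and b: "f 0 = 0" "f (2*pi) = 0" "f1 (2*pi) = 0"
        and AE: "AE x in lborel. x \<in> {0..2*pi} \<longrightarrow> - f1 x - f3 x = c * f x"
        unfolding A_eig_def by blast
      have nz: "\<exists>x\<in>{0..2*pi}. f x \<noteq> 0"
      proof (rule ccontr)
        assume "\<not> (\<exists>x\<in>{0..2*pi}. f x \<noteq> 0)"
        then have "AE x in lborel. x \<in> {0..2*pi} \<longrightarrow> f x = 0" by (intro AE_I2) auto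
        then show False using nAE by blast
      qed
      have "c = 0" using core[OF reg[OF H AE] b _ nz] c by simp
      then show "c \<in> {0}" by simp
    qed
    show "{0} \<subseteq> point_spectrum_A (2 * pi) \<inter> {c. Re c = 0}"
    proof -
      have Ae: "A_eig (2*pi) 0 (\<lambda>x. complex_of_real (1 * (1 - cos x)))"
        by (rule A_eig_cos[where a=1]) simp
      have "0 \<in> point_spectrum_A (2 * pi)" unfolding point_spectrum_A_def mem_Collect_eq
        by (intro exI[of _ "\<lambda>x. complex_of_real (1 * (1 - cos x))"] conjI not_AE_cos Ae)
      then show ?thesis by simp
    qed
  qed
next
  fix f :: "real \<Rightarrow> real"
  assume "A_eig (2 * pi) 0 f"
  then obtain f1 f2 f3 where H: "H3_rep (2*pi) f f1 f2 f3" and b: "f 0 = 0" "f (2*pi) = 0" "f1 (2*pi) = 0"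
    and AE: "AE x in lborel. x \<in> {0..2*pi} \<longrightarrow> - f1 x - f3 x = 0 * f x"
    unfolding A_eig_def by blast
  show "\<exists>a::real. \<forall>x\<in>{0..2 * pi}. f x = a * (1 - cos x)"
    using kernel_real[OF reg[OF H AE] b] by blast
next
  fix f :: "real \<Rightarrow> real"
  assume "\<exists>a::real. \<forall>x\<in>{0..2 * pi}. f x = a * (1 - cos x)"
  then obtain a where "\<forall>x\<in>{0..2 * pi}. f x = a * (1 - cos x)" by blast
  then show "A_eig (2 * pi) 0 f" by (intro A_eig_cos[where a=a]) simp
qed

end
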